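(* Let $a,d$ be real numbers and let $T_n(t,\alpha,\delta)$ denote the general Eulerian polynomials defined below. Then for every integer $n\ge 0$ and every complex $t$ with $|t|<1$ (equivalently, as an identity of formal power series in $t$), $$-\frac{T_n(t,a-d,-d)}{(t-1)^{n+1}}=\sum_{j=0}^{\infty}t^j(a+jd)^n.$$
   Context: For real numbers $\alpha,\delta$, the general Eulerian numbers $A_{n,k}(\alpha,\delta)$ (integers $n\ge 0$, $k$) are defined by $A_{0,-1}(\alpha,\delta)=1$, $A_{n,k}(\alpha,\delta)=0$ whenever $k\ge n$ or $k\le -2$, and for $n\ge 1$, $-1\le k\le n-1$: $$A_{n,k}(\alpha,\delta)=(-\alpha+(k+2)\delta)A_{n-1,k}(\alpha,\delta)+(\alpha+(n-k-1)\delta)A_{n-1,k-1}(\alpha,\delta).$$ The general Eulerian polynomials are $T_n(t,\alpha,\delta)=\sum_{k=-1}^{n-1}A_{n,k}(\alpha,\delta)t^{k+1}$ (so $T_0=1$). In the claim, $T_n(t,a-d,-d)$ is this polynomial with $\alpha=a-d$, $\delta=-d$. Also $x^0=1$ for all $x$. *)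

theory Defs
  imports Complex_Main
begin

fun gen_eulerian_num :: "real \<Rightarrow> real \<Rightarrow> nat \<Rightarrow> int \<Rightarrow> real" where
  "gen_eulerian_num \<alpha> \<delta> 0 k = (if k = -1 then 1 else 0)"
| "gen_eulerian_num \<alpha> \<delta> (Suc n) k =
     (if k \<ge> int (Suc n) \<or> k \<le> -2 then 0
      else (- \<alpha> + (of_int k + 2) * \<delta>) * gen_eulerian_num \<alpha> \<delta> n k
         + (\<alpha> + (of_nat (Suc n) - of_int k - 1) * \<delta>) * gen_eulerian_num \<alpha> \<delta> n (k - 1))"

definition gen_eulerian_poly :: "nat \<Rightarrow> complex \<Rightarrow> real \<Rightarrow> real \<Rightarrow> complex" where
  "gen_eulerian_poly n t \<alpha> \<delta> =
     (\<Sum>k\<in>{-1..int n - 1}. of_real (gen_eulerian_num \<alpha> \<delta> n k) * t ^ nat (k + 1))"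

end

theory Submission
  imports Defs
begin

definition B :: "real \<Rightarrow> real \<Rightarrow> nat \<Rightarrow> nat \<Rightarrow> real" where
  "B a d n i = gen_eulerian_num (a - d) (- d) n (int i - 1)"

lemma B_zero: "i > n \<Longrightarrow> B a d n i = 0"
  by (cases n) (auto simp: B_def)

lemma B_Suc: "B a d (Suc n) i = (- a - real i * d) * B a d n i
   + (if i = 0 then 0 else (a - (real n + 2 - real i) * d) * B a d n (i - 1))"
proof (cases "i \<le> Suc n")
  case True
  show ?thesis
  proof (cases "i = 0")
    case True thus ?thesis by (cases n) (auto simp: B_def algebra_simps)
  next
    case False
    then have "int (i - 1) - 1 = int i - 1 - 1" by simp
    then show ?thesis using False True unfolding B_def
      by (simp add: algebra_simps of_nat_diff)
  qed
next
  case False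
  then show ?thesis using B_zero[of n i a d] B_zero[of "Suc n" i a d] B_zero[of n "i-1" a d] by auto
qed

lemma T_eq: "gen_eulerian_poly n t (a - d) (- d) = (\<Sum>i\<le>n. of_real (B a d n i) * t ^ i)"
  unfolding gen_eulerian_poly_def B_def
  by (rule sum.reindex_bij_witness[of _ "\<lambda>i. int i - 1" "\<lambda>k. nat (k + 1)"]) auto

definition P :: "real \<Rightarrow> real \<Rightarrow> nat \<Rightarrow> complex \<Rightarrow> complex" where
  "P a d n t = (\<Sum>i\<le>n. of_real (B a d n i) * t ^ i)"
definition Q :: "real \<Rightarrow> real \<Rightarrow> nat \<Rightarrow> complex \<Rightarrow> complex" where
  "Q a d n t = (\<Sum>i\<le>n. of_nat i * of_real (B a d n i) * t ^ i)"

lemma P_Suc: "P a d (Suc n) t = - of_real a * (1 - t) * P a d n t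
    - of_real d * of_nat (Suc n) * t * P a d n t - of_real d * (1 - t) * Q a d n t"
proof -
  have "P a d (Suc n) t = (\<Sum>i\<le>Suc n. of_real ((- a - real i * d) * B a d n i) * t ^ i)
     + (\<Sum>i\<le>Suc n. of_real (if i = 0 then 0 else (a - (real n + 2 - real i) * d) * B a d n (i - 1)) * t ^ i)"
    unfolding P_def B_Suc by (simp add: sum.distrib distrib_right)
  also have "(\<Sum>i\<le>Suc n. of_real ((- a - real i * d) * B a d n i) * t ^ i)
      = (\<Sum>i\<le>n. of_real ((- a - real i * d) * B a d n i) * t ^ i)"
    by (simp add: B_zero)
  also have "\<dots> = - of_real a * P a d n t - of_real d * Q a d n t"
    unfolding P_def Q_def by (simp add: sum_distrib_left sum_subtractf[symmetric] algebra_simps)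
  also have "(\<Sum>i\<le>Suc n. of_real (if i = 0 then 0 else (a - (real n + 2 - real i) * d) * B a d n (i - 1)) * t ^ i)
      = (\<Sum>i\<le>n. of_real ((a - (real n + 1 - real i) * d) * B a d n i) * t ^ Suc i)"
    by (subst sum.atMost_Suc_shift) (simp add: algebra_simps)
  also have "\<dots> = t * (of_real a * P a d n t - of_real d * of_nat (Suc n) * P a d n t + of_real d * Q a d n t)"
    unfolding P_def Q_def by (simp add: sum_distrib_left sum_subtractf[symmetric] sum.distrib[symmetric] algebra_simps)
  finally show ?thesis by (simp add: algebra_simps)
qed

lemma P_deriv: "\<exists>D. (P a d n has_field_derivative D) (at t) \<and> t * D = Q a d n t"
proof -
  have "(P a d n has_field_derivative (\<Sum>i\<le>n. of_real (B a d n i) * (of_nat i * t ^ (i - 1)))) (at t)"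
    unfolding P_def by (auto intro!: derivative_eq_intros simp: mult_ac)
  moreover have "t * (\<Sum>i\<le>n. of_real (B a d n i) * (of_nat i * t ^ (i - 1))) = Q a d n t"
    unfolding Q_def sum_distrib_left
  proof (rule sum.cong)
    fix i assume "i \<in> {..n}"
    show "t * (of_real (B a d n i) * (of_nat i * t ^ (i - 1))) = of_nat i * of_real (B a d n i) * t ^ i"
      by (cases i) auto
  qed simp
  ultimately show ?thesis by blast
qed

lemma alg:
  fixes u w :: complex
  assumes "u \<noteq> 0" "w \<noteq> 0"
  shows "A * (s * (PP / (u * w))) + dd * (t * (s * ((D * (u * w) - PP * ((1 + of_nat n) * ((0 - 1) * w))) / ((u * w) * (u * w)))))
    = (- s) * ((- A * u * PP - dd * (1 + of_nat n) * t * PP - dd * u * (t * D)) / (u * u * w))"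
  using assms by (simp add: field_simps)

lemma main:
  fixes a d :: real
  shows "\<forall>t::complex. norm t < 1 \<longrightarrow> (\<lambda>j. (of_real (a + real j * d)) ^ n * t ^ j) sums
           ((-1) ^ n * (P a d n t / (1 - t) ^ (n + 1)))"
proof (induction n)
  case 0
  show ?case
  proof (intro allI impI)
    fix t :: complex assume t: "norm t < 1"
    have "P a d 0 t = 1" by (simp add: P_def B_def)
    then show "(\<lambda>j. (of_real (a + real j * d)) ^ 0 * t ^ j) sums ((-1) ^ 0 * (P a d 0 t / (1 - t) ^ (0 + 1)))"
      using geometric_sums[OF t] by simp
  qed
next
  case (Suc n)
  define c where "c = (\<lambda>j. (complex_of_real (a + real j * d)) ^ n)"
  define f where "f = (\<lambda>t::complex. (-1) ^ n * (P a d n t / (1 - t) ^ (n + 1)))"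
  have IH: "\<And>t. norm t < 1 \<Longrightarrow> (\<lambda>j. c j * t ^ j) sums f t"
    using Suc.IH unfolding c_def f_def by blast
  show ?case
  proof (intro allI impI)
    fix t :: complex assume t: "norm t < 1"
    have t1: "1 - t \<noteq> 0" using t by auto
    define K where "K = complex_of_real ((1 + norm t) / 2)"
    have nK: "norm K = (1 + norm t) / 2" unfolding K_def norm_of_real by simp
    have "norm K < 1" using t nK by simp
    then have smK: "summable (\<lambda>j. c j * K ^ j)" using IH sums_summable by blast
    have d1: "((\<lambda>s. \<Sum>j. c j * s ^ j) has_field_derivative (\<Sum>j. diffs c j * t ^ j)) (at t)"
      by (rule termdiffs_strong[OF smK]) (use t nK in simp)
    have d2: "(f has_field_derivative (\<Sum>j. diffs c j * t ^ j)) (at t)"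
    proof (rule has_field_derivative_transform_within_open[OF d1, of "{s. dist 0 s < 1}"])
      show "open {s::complex. dist 0 s < 1}" by (rule open_ball)
      show "t \<in> {s. dist 0 s < 1}" using t by simp
      fix s :: complex assume "s \<in> {s. dist 0 s < 1}"
      then have "norm s < 1" by simp
      then show "(\<Sum>j. c j * s ^ j) = f s" using IH sums_unique by metis
    qed
    obtain D where D: "(P a d n has_field_derivative D) (at t)" "t * D = Q a d n t"
      using P_deriv by blast
    have g: "((\<lambda>s::complex. (1 - s) ^ Suc n) has_field_derivative
        (1 + of_nat n) * ((0 - 1) * (1 - t) ^ n)) (at t)"
      by (rule DERIV_power_Suc[OF DERIV_diff[OF DERIV_const DERIV_ident]])
    have d3: "(f has_field_derivative (-1) ^ n * ((D * (1 - t) ^ Suc n - P a d n t * ((1 + of_nat n) * ((0 - 1) * (1 - t) ^ n)))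
        / ((1 - t) ^ Suc n * (1 - t) ^ Suc n))) (at t)"
      unfolding f_def using DERIV_cmult[OF DERIV_divide[OF D(1) g]] t1 by simp
    have Deq: "(\<Sum>j. diffs c j * t ^ j) = (-1) ^ n * ((D * (1 - t) ^ Suc n - P a d n t * ((1 + of_nat n) * ((0 - 1) * (1 - t) ^ n)))
        / ((1 - t) ^ Suc n * (1 - t) ^ Suc n))"
      using DERIV_unique[OF d2 d3] .
    have smd: "summable (\<lambda>j. diffs c j * t ^ j)"
      by (rule termdiff_converges[of t 1]) (use t IH sums_summable in auto)
    have s1: "(\<lambda>j. of_nat j * c j * t ^ j) sums (t * (\<Sum>j. diffs c j * t ^ j))"
    proof -
      have "(\<lambda>j. t * (diffs c j * t ^ j)) sums (t * (\<Sum>j. diffs c j * t ^ j))"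
        using summable_sums[OF smd] by (rule sums_mult)
      then have "(\<lambda>j. of_nat (Suc j) * c (Suc j) * t ^ (Suc j)) sums (t * (\<Sum>j. diffs c j * t ^ j))"
        by (simp add: diffs_def mult_ac)
      then show ?thesis by (subst (asm) sums_Suc_iff) simp
    qed
    have s0: "(\<lambda>j. of_real a * (c j * t ^ j)) sums (of_real a * f t)"
      using IH[OF t] by (rule sums_mult)
    have s2: "(\<lambda>j. of_real a * (c j * t ^ j) + of_real d * (of_nat j * c j * t ^ j))
        sums (of_real a * f t + of_real d * (t * (\<Sum>j. diffs c j * t ^ j)))"
      using s0 sums_mult[OF s1, of "of_real d"] by (rule sums_add)
    have eq1: "\<And>j. of_real a * (c j * t ^ j) + of_real d * (of_nat j * c j * t ^ j)
        = (of_real (a + real j * d)) ^ Suc n * t ^ j"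
      unfolding c_def by (simp add: algebra_simps)
    have w: "(1 - t) ^ n \<noteq> 0" using t1 by simp
    have eq2: "of_real a * f t + of_real d * (t * (\<Sum>j. diffs c j * t ^ j))
        = (-1) ^ Suc n * (P a d (Suc n) t / (1 - t) ^ (Suc n + 1))"
      unfolding Deq f_def P_Suc D(2)[symmetric]
      using alg[OF t1 w, of "of_real a" "(-1)^n" "P a d n t" "of_real d" t D n] by simp
    show "(\<lambda>j. (of_real (a + real j * d)) ^ Suc n * t ^ j) sums
           ((-1) ^ Suc n * (P a d (Suc n) t / (1 - t) ^ (Suc n + 1)))"
      using s2 unfolding eq1 eq2 .
  qed
qed

theorem proposition3p4:
  fixes a d :: real and n :: nat and t :: complex
  assumes "norm t < 1"
  shows "(\<lambda>j. t ^ j * (of_real (a + real j * d)) ^ n) sums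
           (- gen_eulerian_poly n t (a - d) (- d) / (t - 1) ^ (n + 1))"
proof -
  have t1: "t - 1 \<noteq> 0" using assms by auto
  have h: "(\<lambda>j. (of_real (a + real j * d)) ^ n * t ^ j) sums ((-1) ^ n * (P a d n t / (1 - t) ^ (n + 1)))"
    using main assms by blast
  have e: "(-1) ^ n * (P a d n t / (1 - t) ^ (n + 1)) = - gen_eulerian_poly n t (a - d) (- d) / (t - 1) ^ (n + 1)"
  proof -
    have "(1 - t) ^ (n + 1) = (-1) ^ (n + 1) * (t - 1) ^ (n + 1)"
    proof -
      have "1 - t = (-1) * (t - 1)" by simp
      then show ?thesis by (simp only: power_mult_distrib)
    qed
    moreover have "\<And>X Y::complex. Y \<noteq> 0 \<Longrightarrow> (-1) ^ n * (X / ((-1) ^ (n + 1) * Y)) = - X / Y"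
      by (cases "even n") auto
    ultimately show ?thesis using t1 unfolding T_eq P_def by simp
  qed
  show ?thesis using h unfolding e by (simp add: mult.commute)
qed

end
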